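(* The mechanism RandPoly is a universally truthful mechanism without money and with verification for CAs with unknown $k$-minded bidders (single supply), and it achieves an expected approximation ratio of $O(\sqrt m)$ (specifically at most $2(\sqrt m+1)$).
   Context: Combinatorial auction with a set $\mathsf U$ of $m$ goods (single copy each) and $n$ bidders. True type of bidder $i$: $t_i=(v_i,\mathcal S_i)$ with $\mathcal S_i$ a private collection of $k$ nonempty subsets of $\mathsf U$ and $v_i:\mathcal S_i\to\mathbb R_{\ge0}$ private, extended by $v_i(T)=\max\{v_i(S'):S'\in\mathcal S_i,S'\subseteq T\}$ ($0$ if none). Greedy algorithm: list elementary bids $(i,S,w_i(S))$ with $w_i(S)>0$ in non-increasing order of value (ties in favour of smaller bidder index); accept a bid (allocate $S$ to $i$) iff $i$ has no set yet and $S$ is disjoint from all accepted sets. RandPoly: let $v_{\max}$ be the largest declared value of any demanded set and $S_{\max}$ a set of that value (ties broken in a bid-independent way); with probability $1/2$ allocate only $S_{\max}$ to its bidder; with probability $1/2$ output the greedy allocation computed on the subinstance consisting only of the bids $(i,S,w_i(S))$ with $|S|\le\sqrt m$. Verification: bidder $i$ with true type $t_i$ facing $\mathbf b_{-i}$ may declare $b_i=(z,\mathcal T)$ only if $z(A_i(b_i,\mathbf b_{-i}))\le v_i(A_i(b_i,\mathbf b_{-i}))$. A deterministic mechanism is truthful without money and with verification if for all $i$, $\mathbf b_{-i}$, true $t_i$ and permitted $b_i$, $v_i(A_i(t_i,\mathbf b_{-i}))\ge v_i(A_i(b_i,\mathbf b_{-i}))$; universally truthful means a probability distribution over such deterministic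 mechanisms. Approximation ratio $\alpha$: on truthful input, expected social welfare $\ge\mathrm{OPT}/\alpha$. *)

theory Defs
  imports "HOL-Probability.Probability"
begin

text \<open>A (declared or true) type of a bidder: a valuation on demanded sets and the
  collection of demanded sets.\<close>
type_synonym 'g btype = "('g set \<Rightarrow> real) \<times> 'g set set"

definition valid_type :: "'g set \<Rightarrow> nat \<Rightarrow> 'g btype \<Rightarrow> bool" where
  "valid_type U k t \<longleftrightarrow> finite (snd t) \<and> card (snd t) = k \<and>
     (\<forall>S\<in>snd t. S \<noteq> {} \<and> S \<subseteq> U \<and> fst t S \<ge> 0)"

definition val :: "'g btype \<Rightarrow> 'g set \<Rightarrow> real" where
  "val t T = Max (insert 0 (fst t ` {S \<in> snd t. S \<subseteq> T}))"

text \<open>Greedy order: non-increasing declared value, ties by smaller bidder index,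
  remaining ties (same bidder, same value) by a fixed bid-independent priority.
  Realised as successive stable sorts (priority, then bidder index, then value).\<close>
definition greedy_order :: "(nat \<Rightarrow> 'g btype) \<Rightarrow> (nat \<times> 'g set \<Rightarrow> nat) \<Rightarrow> (nat \<times> 'g set) set \<Rightarrow> (nat \<times> 'g set) list" where
  "greedy_order b prio E =
     sort_key (\<lambda>p. - fst (b (fst p)) (snd p)) (sort_key fst (sorted_key_list_of_set prio E))"

definition demanded :: "nat \<Rightarrow> (nat \<Rightarrow> 'g btype) \<Rightarrow> ('g set \<Rightarrow> bool) \<Rightarrow> (nat \<times> 'g set) set" where
  "demanded n b P = {(i, S). i < n \<and> S \<in> snd (b i) \<and> P S}"

definition sorted_bids :: "nat \<Rightarrow> (nat \<Rightarrow> 'g btype) \<Rightarrow> (nat \<times> 'g set \<Rightarrow> nat) \<Rightarrow> ('g set \<Rightarrow> bool) \<Rightarrow> (nat \<times> 'g set) list" where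
  "sorted_bids n b prio P =
     greedy_order b prio {p \<in> demanded n b P. fst (b (fst p)) (snd p) > 0}"

fun greedy_scan :: "(nat \<times> 'g set) list \<Rightarrow> (nat \<times> 'g set) list \<Rightarrow> (nat \<times> 'g set) list" where
  "greedy_scan acc [] = acc"
| "greedy_scan acc ((i, S) # rest) =
     (if i \<notin> fst ` set acc \<and> (\<forall>(j, T)\<in>set acc. S \<inter> T = {})
      then greedy_scan ((i, S) # acc) rest else greedy_scan acc rest)"

definition alloc_of :: "(nat \<times> 'g set) list \<Rightarrow> nat \<Rightarrow> 'g set" where
  "alloc_of acc i = \<Union> {S. (i, S) \<in> set acc}"

type_synonym 'g mech = "(nat \<Rightarrow> 'g btype) \<Rightarrow> nat \<Rightarrow> 'g set"

definition greedy_small :: "'g set \<Rightarrow> nat \<Rightarrow> (nat \<times> 'g set \<Rightarrow> nat) \<Rightarrow> 'g mech" where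
  "greedy_small U n prio b =
     alloc_of (greedy_scan [] (sorted_bids n b prio (\<lambda>S. real (card S) \<le> sqrt (real (card U)))))"

definition max_only :: "nat \<Rightarrow> (nat \<times> 'g set \<Rightarrow> nat) \<Rightarrow> 'g mech" where
  "max_only n prio b =
     (let L = greedy_order b prio (demanded n b (\<lambda>_. True))
      in if L = [] then (\<lambda>_. {}) else alloc_of [hd L])"

definition RandPoly :: "'g set \<Rightarrow> nat \<Rightarrow> (nat \<times> 'g set \<Rightarrow> nat) \<Rightarrow> 'g mech pmf" where
  "RandPoly U n prio =
     map_pmf (\<lambda>c. if c then max_only n prio else greedy_small U n prio) (bernoulli_pmf (1/2))"

definition truthful_verif :: "'g set \<Rightarrow> nat \<Rightarrow> nat \<Rightarrow> 'g mech \<Rightarrow> bool" where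
  "truthful_verif U n k M \<longleftrightarrow>
     (\<forall>i<n. \<forall>b t b'. (\<forall>j<n. valid_type U k (b j)) \<longrightarrow> valid_type U k t \<longrightarrow> valid_type U k b' \<longrightarrow>
        val b' (M (b(i := b')) i) \<le> val t (M (b(i := b')) i) \<longrightarrow>
        val t (M (b(i := b')) i) \<le> val t (M (b(i := t)) i))"

definition universally_truthful :: "'g set \<Rightarrow> nat \<Rightarrow> nat \<Rightarrow> 'g mech pmf \<Rightarrow> bool" where
  "universally_truthful U n k D \<longleftrightarrow> (\<forall>M\<in>set_pmf D. truthful_verif U n k M)"

definition feasible :: "'g set \<Rightarrow> nat \<Rightarrow> (nat \<Rightarrow> 'g set) \<Rightarrow> bool" where
  "feasible U n A \<longleftrightarrow> (\<forall>i<n. A i \<subseteq> U) \<and> (\<forall>i<n. \<forall>j<n. i \<noteq> j \<longrightarrow> A i \<inter> A j = {})"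

definition welfare :: "nat \<Rightarrow> (nat \<Rightarrow> 'g btype) \<Rightarrow> (nat \<Rightarrow> 'g set) \<Rightarrow> real" where
  "welfare n t A = (\<Sum>i<n. val (t i) (A i))"

definition OPT :: "'g set \<Rightarrow> nat \<Rightarrow> (nat \<Rightarrow> 'g btype) \<Rightarrow> real" where
  "OPT U n t = Sup {welfare n t A | A. feasible U n A}"

definition expected_welfare :: "nat \<Rightarrow> (nat \<Rightarrow> 'g btype) \<Rightarrow> 'g mech pmf \<Rightarrow> real" where
  "expected_welfare n t D = measure_pmf.expectation D (\<lambda>M. welfare n t (M t))"

end

theory Submission
  imports Defs
begin


definition lt :: "(nat \<times> 'g set \<Rightarrow> real) \<Rightarrow> (nat \<times> 'g set \<Rightarrow> nat) \<Rightarrow> nat \<times> 'g set \<Rightarrow> nat \<times> 'g set \<Rightarrow> bool" where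
  "lt w prio p q \<longleftrightarrow> w p > w q \<or> (w p = w q \<and> (fst p < fst q \<or> (fst p = fst q \<and> prio p < prio q)))"

definition wt :: "(nat \<Rightarrow> 'g btype) \<Rightarrow> nat \<times> 'g set \<Rightarrow> real" where
  "wt b p = fst (b (fst p)) (snd p)"

context linorder begin
lemma skl_props_gen:
  assumes "finite A" "inj_on f A"
  shows "set (sorted_key_list_of_set f A) = A \<and> sorted_wrt (\<lambda>p q. f p < f q) (sorted_key_list_of_set f A)"
proof -
  interpret folding_insort_key "(\<le>)" "(<)" A f
    by (unfold_locales) (rule assms(2))
  have "sorted_wrt (<) (map f (sorted_key_list_of_set f A))"
    using strict_sorted_key_list_of_set[OF subset_refl] by simp
  then show ?thesis using assms by (simp add: sorted_wrt_map)
qed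
end

lemma skl_props:
  fixes prio :: "'b \<Rightarrow> nat"
  assumes "finite A" "inj_on prio A"
  shows "set (sorted_key_list_of_set prio A) = A \<and> sorted_wrt (\<lambda>p q. prio p < prio q) (sorted_key_list_of_set prio A)"
  by (rule skl_props_gen[OF assms])

lemma insort_key_sorted_wrt:
  assumes "\<forall>y\<in>set ys. R x y"
    and "sorted_wrt (\<lambda>p q. f p < f q \<or> (f p = f q \<and> R p q)) ys"
    and "\<And>a b c. R a b \<Longrightarrow> R b c \<Longrightarrow> R a c"
  shows "sorted_wrt (\<lambda>p q. f p < f q \<or> (f p = f q \<and> R p q)) (insort_key f x ys)"
  using assms
proof (induction ys)
  case Nil then show ?case by simp
next
  case (Cons y ys)
  show ?case
  proof (cases "f x \<le> f y")
    case True
    have "\<forall>z\<in>set (y#ys). f x < f z \<or> (f x = f z \<and> R x z)"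
    proof
      fix z assume z: "z \<in> set (y#ys)"
      show "f x < f z \<or> (f x = f z \<and> R x z)"
      proof (cases "z = y")
        case True then show ?thesis using \<open>f x \<le> f y\<close> Cons.prems(1) by auto
      next
        case False
        then have "z \<in> set ys" using z by simp
        then have "f y < f z \<or> (f y = f z \<and> R y z)" using Cons.prems(2) by simp
        then show ?thesis using \<open>f x \<le> f y\<close> Cons.prems(1) z by auto
      qed
    qed
    then show ?thesis using True Cons.prems(2) by simp
  next
    case False
    have ih: "sorted_wrt (\<lambda>p q. f p < f q \<or> (f p = f q \<and> R p q)) (insort_key f x ys)"
      using Cons by simp
    have "\<forall>z\<in>set (insort_key f x ys). f y < f z \<or> (f y = f z \<and> R y z)"
      using Cons.prems(2) False by (auto simp: set_insort_key)
    then show ?thesis using False ih by simp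
  qed
qed

lemma sort_key_sorted_wrt:
  assumes "sorted_wrt R xs"
    and "\<And>a b c. R a b \<Longrightarrow> R b c \<Longrightarrow> R a c"
  shows "sorted_wrt (\<lambda>p q. f p < f q \<or> (f p = f q \<and> R p q)) (sort_key f xs)"
  using assms
proof (induction xs)
  case Nil then show ?case by simp
next
  case (Cons x xs)
  then show ?case by (simp add: insort_key_sorted_wrt)
qed

lemma lt_trans: "lt w prio a b \<Longrightarrow> lt w prio b c \<Longrightarrow> lt w prio a c"
  unfolding lt_def by auto

lemma lt_irrefl: "\<not> lt w prio a a"
  unfolding lt_def by auto

lemma lt_asym: "lt w prio a b \<Longrightarrow> \<not> lt w prio b a"
  unfolding lt_def by auto

lemma greedy_order_props:
  assumes "finite E" "inj_on prio E"
  shows "set (greedy_order b prio E) = E \<and> sorted_wrt (lt (wt b) prio) (greedy_order b prio E)"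
proof -
  note s = skl_props[OF assms]
  have s1: "sorted_wrt (\<lambda>p q. fst p < fst q \<or> (fst p = fst q \<and> prio p < prio q))
     (sort_key fst (sorted_key_list_of_set prio E))"
    by (rule sort_key_sorted_wrt) (use s in auto)
  have s2: "sorted_wrt (\<lambda>p q. - wt b p < - wt b q \<or> (- wt b p = - wt b q \<and> (fst p < fst q \<or> (fst p = fst q \<and> prio p < prio q))))
     (sort_key (\<lambda>p. - wt b p) (sort_key fst (sorted_key_list_of_set prio E)))"
    by (rule sort_key_sorted_wrt[OF s1]) auto
  have e: "(\<lambda>p. - fst (b (fst p)) (snd p)) = (\<lambda>p. - wt b p)" by (simp add: wt_def)
  show ?thesis
    unfolding greedy_order_def e using s s2
    by (auto simp: lt_def elim!: sorted_wrt_mono_rel[rotated])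
qed


lemma scan_append: "greedy_scan acc (xs @ ys) = greedy_scan (greedy_scan acc xs) ys"
  by (induction acc xs rule: greedy_scan.induct) auto

lemma scan_mono: "set acc \<subseteq> set (greedy_scan acc xs)"
  by (induction acc xs rule: greedy_scan.induct) auto

lemma scan_subset: "set (greedy_scan acc xs) \<subseteq> set acc \<union> set xs"
proof (induction acc xs rule: greedy_scan.induct)
  case (2 acc i S rest)
  then show ?case by (cases "i \<notin> fst ` set acc \<and> (\<forall>(j, T)\<in>set acc. S \<inter> T = {})") auto
qed simp

lemma scan_distinct: "distinct (map fst acc) \<Longrightarrow> distinct (map fst (greedy_scan acc xs))"
  by (induction acc xs rule: greedy_scan.induct) auto

lemma scan_filter:
  "i \<notin> fst ` set (greedy_scan acc xs) \<Longrightarrow> greedy_scan acc xs = greedy_scan acc (filter (\<lambda>p. fst p \<noteq> i) xs)"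
proof (induction acc xs rule: greedy_scan.induct)
  case (1 acc) then show ?case by simp
next
  case (2 acc j S rest)
  show ?case
  proof (cases "j \<notin> fst ` set acc \<and> (\<forall>(j', T)\<in>set acc. S \<inter> T = {})")
    case True
    then have e: "greedy_scan acc ((j, S) # rest) = greedy_scan ((j, S) # acc) rest" by simp
    have "j \<noteq> i"
    proof
      assume "j = i"
      have "(j,S) \<in> set (greedy_scan ((j,S)#acc) rest)" using scan_mono[of "(j,S)#acc" rest] by auto
      then have "i \<in> fst ` set (greedy_scan ((j,S)#acc) rest)" using \<open>j = i\<close> by force
      then show False using 2(3) e by simp
    qed
    then show ?thesis using 2 True by auto
  next
    case False
    then have e: "greedy_scan acc ((j, S) # rest) = greedy_scan acc rest" by (simp only: greedy_scan.simps if_not_P[OF False] if_False)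
    have e2: "greedy_scan acc (filter (\<lambda>p. fst p \<noteq> i) ((j, S) # rest)) = greedy_scan acc (filter (\<lambda>p. fst p \<noteq> i) rest)"
    proof (cases "j = i")
      case True then show ?thesis by simp
    next
      case ne: False
      have "greedy_scan acc ((j, S) # filter (\<lambda>p. fst p \<noteq> i) rest) = greedy_scan acc (filter (\<lambda>p. fst p \<noteq> i) rest)"
        by (simp only: greedy_scan.simps if_not_P[OF False] if_False)
      then show ?thesis using ne by simp
    qed
    show ?thesis using 2(2)[OF False] 2(3) unfolding e e2 by simp
  qed
qed

lemma scan_blocker:
  assumes "sorted_wrt R xs" "q \<in> set xs"
  shows "\<exists>g\<in>set (greedy_scan acc xs). (g \<in> set acc \<or> g = q \<or> R g q) \<and> (fst g = fst q \<or> snd g \<inter> snd q \<noteq> {})"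
  using assms
proof (induction acc xs rule: greedy_scan.induct)
  case (1 acc) then show ?case by simp
next
  case (2 acc j S rest)
  show ?case
  proof (cases "(j, S) = q")
    case True
    show ?thesis
    proof (cases "j \<notin> fst ` set acc \<and> (\<forall>(j', T)\<in>set acc. S \<inter> T = {})")
      case True
      then show ?thesis using scan_mono[of "(j,S)#acc" rest] \<open>(j,S) = q\<close> by auto
    next
      case False
      then obtain g where g: "g \<in> set acc" "fst g = j \<or> snd g \<inter> S \<noteq> {}" by (force split: prod.splits)
      have e: "greedy_scan acc ((j, S) # rest) = greedy_scan acc rest" by (simp only: greedy_scan.simps if_not_P[OF False] if_False)
      show ?thesis unfolding e using g scan_mono[of acc rest] \<open>(j,S) = q\<close> by (intro bexI[of _ g]) auto
    qed
  next
    case False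
    then have q: "q \<in> set rest" using 2 by simp
    have Rq: "R (j, S) q" using 2(3) q by simp
    have sr: "sorted_wrt R rest" using 2(3) by simp
    show ?thesis
    proof (cases "j \<notin> fst ` set acc \<and> (\<forall>(j', T)\<in>set acc. S \<inter> T = {})")
      case True
      from 2(1)[OF True sr q] obtain g where
        "g\<in>set (greedy_scan ((j, S) # acc) rest)" "(g \<in> set ((j, S) # acc) \<or> g = q \<or> R g q) \<and> (fst g = fst q \<or> snd g \<inter> snd q \<noteq> {})"
        by blast
      then show ?thesis using True Rq by (intro bexI[of _ g]) auto
    next
      case False
      have e: "greedy_scan acc ((j, S) # rest) = greedy_scan acc rest" by (simp only: greedy_scan.simps if_not_P[OF False] if_False)
      from 2(2)[OF False sr q] show ?thesis unfolding e by simp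
    qed
  qed
qed

lemma alloc_of_unique:
  assumes "distinct (map fst acc)" "(i, X) \<in> set acc"
  shows "alloc_of acc i = X"
proof -
  have "\<And>S. (i, S) \<in> set acc \<Longrightarrow> S = X" using assms by (metis eq_key_imp_eq_value)
  then have "{S. (i, S) \<in> set acc} = {X}" using assms(2) by blast
  then show ?thesis by (simp add: alloc_of_def)
qed

lemma alloc_of_none:
  assumes "i \<notin> fst ` set acc"
  shows "alloc_of acc i = {}"
  using assms by (force simp: alloc_of_def)

lemma scan_accepted:
  assumes "distinct (P @ x # Rr)" "x \<in> set (greedy_scan acc (P @ x # Rr))" "x \<notin> set acc"
  shows "fst x \<notin> fst ` set (greedy_scan acc P) \<and> (\<forall>(j, T)\<in>set (greedy_scan acc P). snd x \<inter> T = {})"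
proof (rule ccontr)
  assume a: "\<not> ?thesis"
  obtain i S where x: "x = (i, S)" by force
  have "greedy_scan acc (P @ x # Rr) = greedy_scan (greedy_scan acc P) Rr"
    using a x by (auto simp: scan_append)
  then have "x \<in> set acc \<union> set P \<union> set Rr"
    using assms(2) scan_subset[of "greedy_scan acc P" Rr] scan_subset[of acc P] by auto
  then show False using assms by auto
qed

lemma scan_accept:
  assumes "fst x \<notin> fst ` set (greedy_scan acc P)" "\<forall>(j, T)\<in>set (greedy_scan acc P). snd x \<inter> T = {}"
  shows "x \<in> set (greedy_scan acc (P @ x # Rr))"
proof -
  obtain i S where x: "x = (i, S)" by force
  have "greedy_scan acc (P @ x # Rr) = greedy_scan (x # greedy_scan acc P) Rr"
    using assms x by (auto simp: scan_append)
  then show ?thesis using scan_mono[of "x # greedy_scan acc P" Rr] by auto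
qed

lemma sorted_unique:
  assumes "sorted_wrt R xs" "sorted_wrt R ys" "set xs = set ys"
    and "\<And>a. \<not> R a a" "\<And>a b. R a b \<Longrightarrow> \<not> R b a"
  shows "xs = ys"
  using assms(1-3)
proof (induction xs arbitrary: ys)
  case Nil then show ?case by simp
next
  case (Cons x xs)
  then obtain y ys' where y: "ys = y # ys'" by (cases ys) auto
  have "x = y"
  proof (rule ccontr)
    assume "x \<noteq> y"
    then have "y \<in> set xs" "x \<in> set ys'" using Cons.prems y by auto
    then have "R x y" "R y x" using Cons.prems y by auto
    then show False using assms(5) by blast
  qed
  moreover have "x \<notin> set xs" using Cons.prems assms(4) by auto
  moreover have "y \<notin> set ys'" using Cons.prems y assms(4) by auto
  ultimately have "set xs = set ys'" using Cons.prems y by auto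
  then have "xs = ys'" using Cons y by simp
  then show ?case using \<open>x = y\<close> y by simp
qed

lemma prefix_filter:
  assumes "sorted_wrt R (P @ x # Rr)" "\<And>a. \<not> R a a" "\<And>a b. R a b \<Longrightarrow> \<not> R b a"
  shows "P = filter (\<lambda>p. R p x) (P @ x # Rr)"
proof -
  have "filter (\<lambda>p. R p x) P = P" using assms(1) by (auto simp: sorted_wrt_append)
  moreover have "filter (\<lambda>p. R p x) Rr = []" using assms by (auto simp: sorted_wrt_append filter_empty_conv)
  ultimately show ?thesis using assms(2) by simp
qed

lemma filter_takeWhile:
  assumes "sorted_wrt R xs" "\<And>a b. R a b \<Longrightarrow> Q b \<Longrightarrow> Q a"
  shows "filter Q xs = takeWhile Q xs"
  using assms(1)
proof (induction xs)
  case Nil then show ?case by simp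
next
  case (Cons x xs)
  show ?case
  proof (cases "Q x")
    case True then show ?thesis using Cons by simp
  next
    case False
    then have "filter Q xs = []" using Cons.prems assms(2) by (auto simp: filter_empty_conv)
    then show ?thesis using False by simp
  qed
qed

lemma takeWhile_mono:
  "(\<forall>p\<in>set xs. P p \<longrightarrow> Q p) \<Longrightarrow> \<exists>zs. takeWhile Q xs = takeWhile P xs @ zs"
proof (induction xs)
  case Nil then show ?case by simp
next
  case (Cons x xs)
  then show ?case by (cases "P x") auto
qed


lemma sorted_wrt_distinct_irrefl: "sorted_wrt R xs \<Longrightarrow> (\<And>a. \<not> R a a) \<Longrightarrow> distinct xs"
  by (induction xs) auto

lemma demanded_sub:
  assumes "\<forall>j<n. valid_type U k (B j)"
  shows "demanded n B P \<subseteq> {..<n} \<times> Pow U"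
  using assms by (auto simp: demanded_def valid_type_def)

lemma go_props:
  assumes "finite U" "inj_on prio ({..<n} \<times> Pow U)" "E \<subseteq> {..<n} \<times> Pow U"
  shows "set (greedy_order B prio E) = E \<and> sorted_wrt (lt (wt B) prio) (greedy_order B prio E)
     \<and> distinct (greedy_order B prio E)"
proof -
  have "finite E" using assms by (meson finite_Pow_iff finite_SigmaI finite_lessThan finite_subset)
  moreover have "inj_on prio E" using assms inj_on_subset by blast
  ultimately have "set (greedy_order B prio E) = E \<and> sorted_wrt (lt (wt B) prio) (greedy_order B prio E)"
    by (rule greedy_order_props)
  then show ?thesis using sorted_wrt_distinct_irrefl lt_irrefl by metis
qed

lemma sorted_bids_eq:
  "sorted_bids n B prio P = greedy_order B prio {p \<in> demanded n B P. 0 < wt B p}"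
  by (simp add: sorted_bids_def wt_def)

lemma sb_props:
  assumes "finite U" "inj_on prio ({..<n} \<times> Pow U)" "\<forall>j<n. valid_type U k (B j)"
  shows "set (sorted_bids n B prio P) = {p \<in> demanded n B P. 0 < wt B p}
    \<and> sorted_wrt (lt (wt B) prio) (sorted_bids n B prio P) \<and> distinct (sorted_bids n B prio P)"
  unfolding sorted_bids_eq
  by (rule go_props[OF assms(1,2)]) (use demanded_sub[OF assms(3)] in blast)

lemma val_nonneg: "finite (snd t) \<Longrightarrow> 0 \<le> val t X"
  unfolding val_def by (rule Max_ge) auto

lemma val_ge: "finite (snd t) \<Longrightarrow> S \<in> snd t \<Longrightarrow> S \<subseteq> X \<Longrightarrow> fst t S \<le> val t X"
  unfolding val_def by (rule Max_ge) auto

lemma val_cases: "finite (snd t) \<Longrightarrow> val t X = 0 \<or> (\<exists>S\<in>snd t. S \<subseteq> X \<and> val t X = fst t S)"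
proof -
  assume f: "finite (snd t)"
  have "val t X \<in> insert 0 (fst t ` {S \<in> snd t. S \<subseteq> X})"
    unfolding val_def by (rule Max_in) (use f in auto)
  then show ?thesis by auto
qed

lemma valid_fin: "valid_type U k t \<Longrightarrow> finite (snd t)"
  by (simp add: valid_type_def)


lemma greedy_truthful:
  assumes U: "finite U" and inj: "inj_on prio ({..<n} \<times> Pow U)"
  shows "truthful_verif U n k (greedy_small U n prio)"
  unfolding truthful_verif_def
proof (intro allI impI)
  fix i b t b'
  assume i: "i < n" and vb: "\<forall>j<n. valid_type U k (b j)" and vt: "valid_type U k t"
    and vb': "valid_type U k b'"
    and ver: "val b' (greedy_small U n prio (b(i := b')) i) \<le> val t (greedy_small U n prio (b(i := b')) i)"
  define B' where "B' = b(i := b')"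
  define B where "B = b(i := t)"
  define Pr where "Pr = (\<lambda>S::'a set. real (card S) \<le> sqrt (real (card U)))"
  define L' where "L' = sorted_bids n B' prio Pr"
  define L where "L = sorted_bids n B prio Pr"
  define G' where "G' = greedy_scan [] L'"
  define G where "G = greedy_scan [] L"
  have vB': "\<forall>j<n. valid_type U k (B' j)" using vb vb' by (simp add: B'_def)
  have vB: "\<forall>j<n. valid_type U k (B j)" using vb vt by (simp add: B_def)
  note pL' = sb_props[OF U inj vB', of Pr, folded L'_def]
  note pL = sb_props[OF U inj vB, of Pr, folded L_def]
  have gs': "greedy_small U n prio B' = alloc_of G'" by (simp add: greedy_small_def G'_def L'_def Pr_def)
  have gs: "greedy_small U n prio B = alloc_of G" by (simp add: greedy_small_def G_def L_def Pr_def)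
  have dG': "distinct (map fst G')" unfolding G'_def by (rule scan_distinct) simp
  have dG: "distinct (map fst G)" unfolding G_def by (rule scan_distinct) simp
  have ft: "finite (snd t)" using vt by (rule valid_fin)
  have fb': "finite (snd b')" using vb' by (rule valid_fin)
  have wB_other: "\<And>p. fst p \<noteq> i \<Longrightarrow> wt B p = wt B' p" by (simp add: wt_def B_def B'_def)
  have wBi: "\<And>S. wt B (i, S) = fst t S" by (simp add: wt_def B_def)
  have wB'i: "\<And>S. wt B' (i, S) = fst b' S" by (simp add: wt_def B'_def)
  show "val t (greedy_small U n prio B' i) \<le> val t (greedy_small U n prio B i)"
  proof (cases "i \<in> fst ` set G'")
    case False
    then have "greedy_small U n prio B' i = {}" using gs' alloc_of_none by metis
    moreover have "val t {} = 0"
    proof -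
      have "{S \<in> snd t. S \<subseteq> {}} = {}" using vt by (auto simp: valid_type_def)
      then show ?thesis unfolding val_def by (metis Max_singleton image_empty)
    qed
    ultimately show ?thesis using val_nonneg[OF ft] by simp
  next
    case True
    then obtain A where iA: "(i, A) \<in> set G'" by force
    have allocA: "greedy_small U n prio B' i = A" using gs' alloc_of_unique[OF dG' iA] by simp
    show ?thesis
    proof (cases "val t A = 0")
      case True then show ?thesis using allocA val_nonneg[OF ft] by simp
    next
      case False
      then obtain S' where S': "S' \<in> snd t" "S' \<subseteq> A" "val t A = fst t S'"
        using val_cases[OF ft] by blast
      have pos: "0 < fst t S'" using False S'(3) val_nonneg[OF ft, of A] by simp
      have iAL': "(i, A) \<in> set L'" using iA scan_subset[of "[]" L'] by (auto simp: G'_def)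
      then have A_in: "A \<in> snd b'" "Pr A" using pL' by (auto simp: demanded_def B'_def)
      have AU: "A \<subseteq> U" using A_in vb' by (auto simp: valid_type_def)
      have "fst b' A \<le> val b' A" using val_ge[OF fb' A_in(1)] by simp
      also have "\<dots> \<le> val t A" using ver allocA by (simp add: B'_def)
      finally have wle: "wt B' (i, A) \<le> fst t S'" using S'(3) wB'i by simp
      have "card S' \<le> card A" using S'(2) AU U by (meson card_mono finite_subset)
      then have PrS: "Pr S'" using A_in(2) unfolding Pr_def by linarith
      have "S' \<in> snd (B i)" using S'(1) by (simp add: B_def)
      moreover have "0 < wt B (i, S')" using wBi pos by simp
      ultimately have iSL: "(i, S') \<in> set L" using pL i PrS by (simp add: demanded_def)
      obtain P R where LPR: "L = P @ (i, S') # R" using iSL split_list by metis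
      obtain P' R' where LPR': "L' = P' @ (i, A) # R'" using iAL' split_list by metis
      show ?thesis
      proof (cases "i \<in> fst ` set (greedy_scan [] P)")
        case True
        then obtain X where iX: "(i, X) \<in> set (greedy_scan [] P)" by force
        have "(i, X) \<in> set G" using iX scan_mono[of "greedy_scan [] P"] unfolding G_def LPR scan_append by blast
        then have allocX: "greedy_small U n prio B i = X" using gs alloc_of_unique[OF dG] by simp
        have "(i, X) \<in> set P" using iX scan_subset[of "[]" P] by auto
        then have "lt (wt B) prio (i, X) (i, S')" using pL LPR by (auto simp: sorted_wrt_append)
        then have "fst t S' \<le> fst t X" by (auto simp: lt_def wBi)
        moreover have "X \<in> snd t"
        proof -
          have "(i, X) \<in> set L" using \<open>(i, X) \<in> set P\<close> LPR by simp
          then have "(i, X) \<in> demanded n B Pr" using pL by blast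
          then show ?thesis by (simp add: demanded_def B_def)
        qed
        ultimately show ?thesis using allocX allocA S'(3) val_ge[OF ft, of X X] by simp
      next
        case notP: False
        have acc': "i \<notin> fst ` set (greedy_scan [] P') \<and> (\<forall>(j, T)\<in>set (greedy_scan [] P'). A \<inter> T = {})"
          using scan_accepted[of P' "(i, A)" R' "[]"] pL' iA LPR' by (simp add: G'_def)
        define oth where "oth = (\<lambda>p::nat \<times> 'a set. fst p \<noteq> i)"
        define Ol where "Ol = filter oth L"
        define Ol2 where "Ol2 = filter oth L'"
        have e1: "greedy_scan [] P = greedy_scan [] (filter oth P)"
          using scan_filter[OF notP] by (simp add: oth_def)
        have e2: "greedy_scan [] P' = greedy_scan [] (filter oth P')"
          using scan_filter[of i "[]" P'] acc' by (simp add: oth_def)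
        have sO: "sorted_wrt (lt (wt B) prio) Ol" using pL by (simp add: Ol_def sorted_wrt_filter)
        have sO'0: "sorted_wrt (lt (wt B') prio) Ol2" using pL' by (simp add: Ol2_def sorted_wrt_filter)
        have lteq: "\<And>p q. oth p \<Longrightarrow> oth q \<Longrightarrow> lt (wt B') prio p q = lt (wt B) prio p q"
          using wB_other by (simp add: lt_def oth_def)
        have sO': "sorted_wrt (lt (wt B) prio) Ol2"
          using sO'0 by (rule sorted_wrt_mono_rel[rotated]) (auto simp: Ol2_def lteq)
        have setO: "set Ol = set Ol2"
        proof -
          have "\<And>p. oth p \<Longrightarrow> (p \<in> demanded n B Pr \<and> 0 < wt B p) = (p \<in> demanded n B' Pr \<and> 0 < wt B' p)"
            using wB_other by (auto simp: oth_def demanded_def B_def B'_def)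
          then show ?thesis using pL pL' by (auto simp: Ol_def Ol2_def)
        qed
        have OO: "Ol = Ol2" by (rule sorted_unique[OF sO sO' setO lt_irrefl lt_asym])
        have "sorted_wrt (lt (wt B) prio) (P @ (i, S') # R)" using pL LPR by simp
        from prefix_filter[OF this lt_irrefl lt_asym]
        have fP: "P = filter (\<lambda>p. lt (wt B) prio p (i, S')) L" using LPR by simp
        have "sorted_wrt (lt (wt B') prio) (P' @ (i, A) # R')" using pL' LPR' by simp
        from prefix_filter[OF this lt_irrefl lt_asym]
        have fP': "P' = filter (\<lambda>p. lt (wt B') prio p (i, A)) L'" using LPR' by simp
        have fo1: "filter oth P = filter (\<lambda>p. lt (wt B) prio p (i, S')) Ol"
          by (subst fP) (simp add: Ol_def conj_commute)
        have fo2: "filter oth P' = filter (\<lambda>p. lt (wt B') prio p (i, A)) Ol"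
          by (subst fP') (simp add: OO Ol2_def conj_commute)
        have sOB': "sorted_wrt (lt (wt B') prio) Ol" using sO'0 OO by simp
        have tw1: "filter oth P = takeWhile (\<lambda>p. lt (wt B) prio p (i, S')) Ol"
          unfolding fo1 by (rule filter_takeWhile[OF sO]) (blast intro: lt_trans)
        have tw2: "filter oth P' = takeWhile (\<lambda>p. lt (wt B') prio p (i, A)) Ol"
          unfolding fo2 by (rule filter_takeWhile[OF sOB']) (blast intro: lt_trans)
        have mono: "\<forall>p\<in>set Ol. lt (wt B) prio p (i, S') \<longrightarrow> lt (wt B') prio p (i, A)"
        proof (intro ballI impI)
          fix p assume pO: "p \<in> set Ol" and l: "lt (wt B) prio p (i, S')"
          have op: "fst p \<noteq> i" using pO by (simp add: Ol_def oth_def)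
          then have "wt B' p = wt B p" using wB_other by simp
          then show "lt (wt B') prio p (i, A)" using l op wle unfolding lt_def wBi by auto
        qed
        obtain zs where zs0: "takeWhile (\<lambda>p. lt (wt B') prio p (i, A)) Ol = takeWhile (\<lambda>p. lt (wt B) prio p (i, S')) Ol @ zs"
          using takeWhile_mono[OF mono] by blast
        have zs: "filter oth P' = filter oth P @ zs" unfolding tw1 tw2 by (rule zs0)
        have "greedy_scan [] P' = greedy_scan (greedy_scan [] P) zs"
          unfolding e2 zs scan_append e1[symmetric] ..
        then have sub: "set (greedy_scan [] P) \<subseteq> set (greedy_scan [] P')"
          using scan_mono by simp
        have acc: "fst (i, S') \<notin> fst ` set (greedy_scan [] P) \<and> (\<forall>(j, T)\<in>set (greedy_scan [] P). snd (i, S') \<inter> T = {})"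
        proof
          show "fst (i, S') \<notin> fst ` set (greedy_scan [] P)" using notP by simp
          show "\<forall>(j, T)\<in>set (greedy_scan [] P). snd (i, S') \<inter> T = {}"
          proof (intro ballI)
            fix p assume p: "p \<in> set (greedy_scan [] P)"
            obtain j T where pj: "p = (j, T)" by force
            have "p \<in> set (greedy_scan [] P')" using p sub by blast
            then have "A \<inter> T = {}" using acc' pj by blast
            then show "case p of (j, T) \<Rightarrow> snd (i, S') \<inter> T = {}" using pj S'(2) by auto
          qed
        qed
        have "(i, S') \<in> set G" unfolding G_def LPR using scan_accept acc by blast
        then have "greedy_small U n prio B i = S'" using gs alloc_of_unique[OF dG] by simp
        then show ?thesis using allocA S'(3) val_ge[OF ft S'(1), of S'] by simp
      qed
    qed
  qed
qed


lemma val_empty: "valid_type U k t \<Longrightarrow> val t {} = 0"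
proof -
  assume vt: "valid_type U k t"
  have "{S \<in> snd t. S \<subseteq> {}} = {}" using vt by (auto simp: valid_type_def)
  then show ?thesis unfolding val_def by (metis Max_singleton image_empty)
qed

lemma alloc_single: "alloc_of [x] j = (if fst x = j then snd x else {})"
  by (cases x) (auto simp: alloc_of_def)

lemma max_truthful:
  assumes U: "finite U" and inj: "inj_on prio ({..<n} \<times> Pow U)"
  shows "truthful_verif U n k (max_only n prio)"
  unfolding truthful_verif_def
proof (intro allI impI)
  fix i b t b'
  assume i: "i < n" and vb: "\<forall>j<n. valid_type U k (b j)" and vt: "valid_type U k t"
    and vb': "valid_type U k b'"
    and ver: "val b' (max_only n prio (b(i := b')) i) \<le> val t (max_only n prio (b(i := b')) i)"
  define B' where "B' = b(i := b')"
  define B where "B = b(i := t)"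
  define L' where "L' = greedy_order B' prio (demanded n B' (\<lambda>_. True))"
  define L where "L = greedy_order B prio (demanded n B (\<lambda>_. True))"
  have vB': "\<forall>j<n. valid_type U k (B' j)" using vb vb' by (simp add: B'_def)
  have vB: "\<forall>j<n. valid_type U k (B j)" using vb vt by (simp add: B_def)
  note pL' = go_props[OF U inj demanded_sub[OF vB'], of B' "\<lambda>_. True", folded L'_def]
  note pL = go_props[OF U inj demanded_sub[OF vB], of B "\<lambda>_. True", folded L_def]
  have m': "max_only n prio B' = (if L' = [] then (\<lambda>_. {}) else alloc_of [hd L'])"
    by (simp add: max_only_def L'_def)
  have m: "max_only n prio B = (if L = [] then (\<lambda>_. {}) else alloc_of [hd L])"
    by (simp add: max_only_def L_def)
  have ft: "finite (snd t)" using vt by (rule valid_fin)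
  have fb': "finite (snd b')" using vb' by (rule valid_fin)
  have wB_other: "\<And>p. fst p \<noteq> i \<Longrightarrow> wt B p = wt B' p" by (simp add: wt_def B_def B'_def)
  have wBi: "\<And>S. wt B (i, S) = fst t S" by (simp add: wt_def B_def)
  have wB'i: "\<And>S. wt B' (i, S) = fst b' S" by (simp add: wt_def B'_def)
  show "val t (max_only n prio B' i) \<le> val t (max_only n prio B i)"
  proof (cases "L' \<noteq> [] \<and> fst (hd L') = i")
    case False
    then have "max_only n prio B' i = {}" using m' by (auto simp: alloc_single)
    then show ?thesis using val_nonneg[OF ft] val_empty[OF vt] by simp
  next
    case True
    then obtain A where hA: "hd L' = (i, A)" by (metis prod.collapse)
    have allocA: "max_only n prio B' i = A" using m' True hA by (simp add: alloc_single)
    show ?thesis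
    proof (cases "val t A = 0")
      case True then show ?thesis using allocA val_nonneg[OF ft] by simp
    next
      case False
      then obtain S' where S': "S' \<in> snd t" "S' \<subseteq> A" "val t A = fst t S'"
        using val_cases[OF ft] by blast
      have iAL': "(i, A) \<in> set L'" using True hA by (metis list.set_sel(1))
      then have A_in: "A \<in> snd b'" using pL' by (auto simp: demanded_def B'_def)
      have "fst b' A \<le> val b' A" using val_ge[OF fb' A_in] by simp
      also have "\<dots> \<le> val t A" using ver allocA by (simp add: B'_def)
      finally have wle: "wt B' (i, A) \<le> fst t S'" using S'(3) wB'i by simp
      have "S' \<in> snd (B i)" using S'(1) by (simp add: B_def)
      then have iSL: "(i, S') \<in> set L" using pL i by (simp add: demanded_def)
      then have Lne: "L \<noteq> []" by auto
      define h where "h = hd L"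
      have Lh: "L = h # tl L" using Lne by (simp add: h_def)
      have hL: "h \<in> set L" using Lne by (simp add: h_def)
      have hmin: "\<And>q. q \<in> set L \<Longrightarrow> q \<noteq> h \<Longrightarrow> lt (wt B) prio h q"
        using pL Lh by (metis set_ConsD sorted_wrt.simps(2))
      have L'h: "L' = (i, A) # tl L'" using True hA by (metis list.collapse)
      have hmin': "\<And>q. q \<in> set L' \<Longrightarrow> q \<noteq> (i, A) \<Longrightarrow> lt (wt B') prio (i, A) q"
        using pL' L'h by (metis set_ConsD sorted_wrt.simps(2))
      have claim: "fst h = i \<and> fst t S' \<le> wt B h"
      proof (cases "h = (i, S')")
        case True then show ?thesis using wBi by simp
      next
        case False
        then have l1: "lt (wt B) prio h (i, S')" using hmin iSL by simp
        show ?thesis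
        proof (cases "fst h = i")
          case True then show ?thesis using l1 wBi unfolding lt_def by auto
        next
          case ne: False
          have "h \<in> demanded n B (\<lambda>_. True)" using hL pL by blast
          then have "h \<in> demanded n B' (\<lambda>_. True)" using ne
            by (cases h) (auto simp: demanded_def B_def B'_def)
          then have "h \<in> set L'" using pL' by blast
          moreover have "h \<noteq> (i, A)" using ne by auto
          ultimately have l2: "lt (wt B') prio (i, A) h" using hmin' by blast
          have "wt B h = wt B' h" using wB_other ne by simp
          then show ?thesis using l1 l2 wle ne unfolding lt_def wBi by auto
        qed
      qed
      obtain X where hX: "h = (i, X)" using claim by (metis prod.collapse)
      have allocX: "max_only n prio B i = X" using m Lne hX h_def by (simp add: alloc_single)
      have "X \<in> snd t" using hL hX pL by (auto simp: demanded_def B_def)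
      then have "fst t X \<le> val t X" using val_ge[OF ft] by simp
      then show ?thesis using allocA allocX claim hX wBi S'(3) by simp
    qed
  qed
qed



lemma charge:
  fixes T :: "nat \<Rightarrow> 'a set" and hb :: "nat \<Rightarrow> nat \<times> 'a set" and w :: "nat \<times> 'a set \<Rightarrow> real"
  assumes fJ: "finite Js" and hG: "\<forall>j\<in>Js. hb j \<in> Gs" and fG: "finite Gs"
    and hw: "\<forall>j\<in>Js. w (j, T j) \<le> w (hb j) \<and> (fst (hb j) = j \<or> snd (hb j) \<inter> T j \<noteq> {})"
    and dis: "\<forall>j\<in>Js. \<forall>j'\<in>Js. j \<noteq> j' \<longrightarrow> T j \<inter> T j' = {}"
    and gp: "\<forall>g\<in>Gs. finite (snd g) \<and> real (card (snd g)) \<le> c \<and> 0 \<le> w g"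
  shows "(\<Sum>j\<in>Js. w (j, T j)) \<le> (c + 1) * (\<Sum>g\<in>Gs. w g)"
proof -
  have cardb: "real (card {j \<in> Js. hb j = g}) \<le> c + 1" if g: "g \<in> Gs" for g
  proof -
    have sub: "{j \<in> Js. hb j = g} \<subseteq> {j \<in> Js. j = fst g} \<union> {j \<in> Js. snd g \<inter> T j \<noteq> {}}"
    proof
      fix j assume j: "j \<in> {j \<in> Js. hb j = g}"
      then have "j \<in> Js" "hb j = g" by auto
      then have "fst (hb j) = j \<or> snd (hb j) \<inter> T j \<noteq> {}" using hw by blast
      then have "fst g = j \<or> snd g \<inter> T j \<noteq> {}" using \<open>hb j = g\<close> by simp
      then show "j \<in> {j \<in> Js. j = fst g} \<union> {j \<in> Js. snd g \<inter> T j \<noteq> {}}" using \<open>j \<in> Js\<close> by blast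
    qed
    have c1: "card {j \<in> Js. j = fst g} \<le> 1"
    proof -
      have "{j \<in> Js. j = fst g} \<subseteq> {fst g}" by auto
      then have "card {j \<in> Js. j = fst g} \<le> card {fst g}" by (intro card_mono) auto
      then show ?thesis by simp
    qed
    have c2: "card {j \<in> Js. snd g \<inter> T j \<noteq> {}} \<le> card (snd g)"
    proof (rule card_inj_on_le[where f = "\<lambda>j. SOME x. x \<in> snd g \<inter> T j"])
      show "inj_on (\<lambda>j. SOME x. x \<in> snd g \<inter> T j) {j \<in> Js. snd g \<inter> T j \<noteq> {}}"
      proof (rule inj_onI)
        fix a b assume a: "a \<in> {j \<in> Js. snd g \<inter> T j \<noteq> {}}" and b: "b \<in> {j \<in> Js. snd g \<inter> T j \<noteq> {}}"
          and e: "(SOME x. x \<in> snd g \<inter> T a) = (SOME x. x \<in> snd g \<inter> T b)"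
        have "(SOME x. x \<in> snd g \<inter> T a) \<in> snd g \<inter> T a" by (rule someI_ex) (use a in blast)
        moreover have "(SOME x. x \<in> snd g \<inter> T b) \<in> snd g \<inter> T b" by (rule someI_ex) (use b in blast)
        ultimately have "T a \<inter> T b \<noteq> {}" using e by auto
        then show "a = b" using dis a b by blast
      qed
      show "(\<lambda>j. SOME x. x \<in> snd g \<inter> T j) ` {j \<in> Js. snd g \<inter> T j \<noteq> {}} \<subseteq> snd g"
      proof (rule image_subsetI)
        fix j assume j: "j \<in> {j \<in> Js. snd g \<inter> T j \<noteq> {}}"
        then have "\<exists>x. x \<in> snd g \<inter> T j" by blast
        then have "(SOME x. x \<in> snd g \<inter> T j) \<in> snd g \<inter> T j" by (rule someI_ex)
        then show "(SOME x. x \<in> snd g \<inter> T j) \<in> snd g" by blast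
      qed
      show "finite (snd g)" using gp g by blast
    qed
    have "card {j \<in> Js. hb j = g} \<le> card ({j \<in> Js. j = fst g} \<union> {j \<in> Js. snd g \<inter> T j \<noteq> {}})"
      using sub fJ by (intro card_mono) auto
    also have "\<dots> \<le> card {j \<in> Js. j = fst g} + card {j \<in> Js. snd g \<inter> T j \<noteq> {}}" by (rule card_Un_le)
    finally have "card {j \<in> Js. hb j = g} \<le> 1 + card (snd g)" using c1 c2 by linarith
    then have "real (card {j \<in> Js. hb j = g}) \<le> 1 + real (card (snd g))" by linarith
    moreover have "real (card (snd g)) \<le> c" using gp g by blast
    ultimately show ?thesis by linarith
  qed
  have "(\<Sum>j\<in>Js. w (j, T j)) \<le> (\<Sum>j\<in>Js. w (hb j))" using hw by (intro sum_mono) auto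
  also have "\<dots> = (\<Sum>g\<in>hb ` Js. \<Sum>j\<in>{j \<in> Js. hb j = g}. w (hb j))"
    by (rule sum.image_gen[OF fJ])
  also have "\<dots> = (\<Sum>g\<in>hb ` Js. real (card {j \<in> Js. hb j = g}) * w g)"
  proof (rule sum.cong[OF refl])
    fix g assume "g \<in> hb ` Js"
    have "(\<Sum>j\<in>{j \<in> Js. hb j = g}. w (hb j)) = (\<Sum>j\<in>{j \<in> Js. hb j = g}. w g)"
      by (rule sum.cong) auto
    then show "(\<Sum>j\<in>{j \<in> Js. hb j = g}. w (hb j)) = real (card {j \<in> Js. hb j = g}) * w g" by simp
  qed
  also have "\<dots> \<le> (\<Sum>g\<in>hb ` Js. (c + 1) * w g)"
  proof (rule sum_mono)
    fix g assume "g \<in> hb ` Js"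
    then have g: "g \<in> Gs" using hG by blast
    show "real (card {j \<in> Js. hb j = g}) * w g \<le> (c + 1) * w g"
      by (rule mult_right_mono[OF cardb[OF g]]) (use gp g in blast)
  qed
  also have "\<dots> \<le> (\<Sum>g\<in>Gs. (c + 1) * w g)"
  proof (rule sum_mono2[OF fG])
    show "hb ` Js \<subseteq> Gs" using hG by auto
    fix b assume "b \<in> Gs - hb ` Js"
    then have b: "b \<in> Gs" by blast
    then have "real (card (snd b)) \<le> c" using gp by blast
    then have "0 \<le> c" using of_nat_0_le_iff[of "card (snd b)"] by linarith
    then show "0 \<le> (c + 1) * w b" using gp b by simp
  qed
  also have "\<dots> = (c + 1) * (\<Sum>g\<in>Gs. w g)" by (simp add: sum_distrib_left)
  finally show ?thesis .
qed


lemma welfare_nonneg: "\<forall>i<n. finite (snd (t i)) \<Longrightarrow> 0 \<le> welfare n t A"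
  unfolding welfare_def by (intro sum_nonneg) (simp add: val_nonneg)

lemma welfare_ge_G:
  assumes d: "distinct (map fst G)" and gG: "\<forall>g\<in>set G. fst g < n \<and> snd g \<in> snd (t (fst g))"
    and f: "\<forall>i<n. finite (snd (t i))"
  shows "(\<Sum>g\<in>set G. wt t g) \<le> welfare n t (alloc_of G)"
proof -
  have "(\<Sum>g\<in>set G. wt t g) \<le> (\<Sum>g\<in>set G. val (t (fst g)) (alloc_of G (fst g)))"
  proof (rule sum_mono)
    fix g assume g: "g \<in> set G"
    have a: "alloc_of G (fst g) = snd g" using alloc_of_unique[OF d, of "fst g" "snd g"] g by simp
    show "wt t g \<le> val (t (fst g)) (alloc_of G (fst g))"
      unfolding a wt_def using val_ge[of "t (fst g)" "snd g" "snd g"] f gG g by simp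
  qed
  also have "\<dots> = (\<Sum>i\<in>fst ` set G. val (t i) (alloc_of G i))"
  proof -
    have "inj_on fst (set G)" using d by (simp add: distinct_map)
    then show ?thesis by (simp add: sum.reindex)
  qed
  also have "\<dots> \<le> (\<Sum>i<n. val (t i) (alloc_of G i))"
    by (rule sum_mono2) (use gG f in \<open>auto simp: val_nonneg\<close>)
  finally show ?thesis by (simp add: welfare_def)
qed

lemma max_bound:
  assumes U: "finite U" and inj: "inj_on prio ({..<n} \<times> Pow U)" and vt: "\<forall>i<n. valid_type U k (t i)"
    and p: "p \<in> demanded n t (\<lambda>_. True)"
  shows "wt t p \<le> welfare n t (max_only n prio t)"
proof -
  define L where "L = greedy_order t prio (demanded n t (\<lambda>_. True))"
  note pL = go_props[OF U inj demanded_sub[OF vt], of t "\<lambda>_. True", folded L_def]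
  have f: "\<forall>i<n. finite (snd (t i))" using vt valid_fin by blast
  have pL': "p \<in> set L" using pL p by blast
  then have Lne: "L \<noteq> []" by auto
  define h where "h = hd L"
  have Lh: "L = h # tl L" using Lne by (simp add: h_def)
  have hL: "h \<in> set L" using Lne by (simp add: h_def)
  have "wt t p \<le> wt t h"
  proof (cases "p = h")
    case False
    then have "lt (wt t) prio h p" using pL Lh pL' by (metis set_ConsD sorted_wrt.simps(2))
    then show ?thesis by (auto simp: lt_def)
  qed simp
  moreover have m: "max_only n prio t = alloc_of [h]" using Lne by (simp add: max_only_def L_def h_def)
  moreover have "wt t h \<le> welfare n t (alloc_of [h])"
  proof -
    have "h \<in> demanded n t (\<lambda>_. True)" using hL pL by blast
    then have "\<forall>g\<in>set [h]. fst g < n \<and> snd g \<in> snd (t (fst g))" by (auto simp: demanded_def)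
    from welfare_ge_G[OF _ this f] show ?thesis by simp
  qed
  ultimately show ?thesis by simp
qed


lemma approx:
  assumes U: "finite U" and inj: "inj_on prio ({..<n} \<times> Pow U)"
    and vt: "\<forall>i<n. valid_type U k (t i)" and feas: "feasible U n A"
  shows "welfare n t A \<le> (sqrt (real (card U)) + 1) *
           (welfare n t (max_only n prio t) + welfare n t (greedy_small U n prio t))"
proof -
  define sq where "sq = sqrt (real (card U))"
  define Wm where "Wm = welfare n t (max_only n prio t)"
  define Wg where "Wg = welfare n t (greedy_small U n prio t)"
  have f: "\<forall>i<n. finite (snd (t i))" using vt valid_fin by blast
  have Wm0: "0 \<le> Wm" unfolding Wm_def using f by (rule welfare_nonneg)
  have sq0: "0 \<le> sq" by (simp add: sq_def)
  define J where "J = {j \<in> {..<n}. val (t j) (A j) \<noteq> 0}"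
  define T where "T = (\<lambda>j. SOME S. S \<in> snd (t j) \<and> S \<subseteq> A j \<and> val (t j) (A j) = fst (t j) S)"
  have fJ: "finite J" by (simp add: J_def)
  have TJ: "T j \<in> snd (t j) \<and> T j \<subseteq> A j \<and> val (t j) (A j) = fst (t j) (T j)" if j: "j \<in> J" for j
  proof -
    have "j < n" "val (t j) (A j) \<noteq> 0" using j by (auto simp: J_def)
    then have "\<exists>S. S \<in> snd (t j) \<and> S \<subseteq> A j \<and> val (t j) (A j) = fst (t j) S"
      using val_cases f by blast
    then show ?thesis unfolding T_def by (rule someI_ex)
  qed
  have jn: "\<And>j. j \<in> J \<Longrightarrow> j < n" by (simp add: J_def)
  have wJ: "wt t (j, T j) = val (t j) (A j)" if "j \<in> J" for j using TJ[OF that] by (simp add: wt_def)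
  have wpos: "0 < wt t (j, T j)" if j: "j \<in> J" for j
  proof -
    have "val (t j) (A j) \<noteq> 0" using j by (simp add: J_def)
    moreover have "0 \<le> val (t j) (A j)" using f jn[OF j] val_nonneg by blast
    ultimately show ?thesis using wJ[OF j] by simp
  qed
  have TU: "T j \<subseteq> U \<and> T j \<noteq> {}" if j: "j \<in> J" for j
    using vt jn[OF j] TJ[OF j] by (auto simp: valid_type_def)
  have dis: "\<forall>j\<in>J. \<forall>j'\<in>J. j \<noteq> j' \<longrightarrow> T j \<inter> T j' = {}"
  proof (intro ballI impI)
    fix j j' assume j: "j \<in> J" and j': "j' \<in> J" and ne: "j \<noteq> j'"
    have "A j \<inter> A j' = {}" using feas jn[OF j] jn[OF j'] ne by (simp add: feasible_def)
    then show "T j \<inter> T j' = {}" using TJ[OF j] TJ[OF j'] by blast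
  qed
  have dem: "(j, T j) \<in> demanded n t P" if j: "j \<in> J" and "P (T j)" for j P
    using jn[OF j] TJ[OF j] that by (simp add: demanded_def)
  have wA: "welfare n t A = (\<Sum>j\<in>J. wt t (j, T j))"
  proof -
    have "welfare n t A = (\<Sum>j\<in>J. val (t j) (A j))"
      unfolding welfare_def by (rule sum.mono_neutral_right) (auto simp: J_def)
    also have "\<dots> = (\<Sum>j\<in>J. wt t (j, T j))" using wJ by simp
    finally show ?thesis .
  qed
  define Pr where "Pr = (\<lambda>S::'a set. real (card S) \<le> sqrt (real (card U)))"
  define Jl where "Jl = {j \<in> J. \<not> Pr (T j)}"
  define Js where "Js = {j \<in> J. Pr (T j)}"
  have JU: "J = Jl \<union> Js" "Jl \<inter> Js = {}" by (auto simp: Jl_def Js_def)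
  have fJl: "finite Jl" "finite Js" using fJ by (auto simp: Jl_def Js_def)
  have split: "(\<Sum>j\<in>J. wt t (j, T j)) = (\<Sum>j\<in>Jl. wt t (j, T j)) + (\<Sum>j\<in>Js. wt t (j, T j))"
    unfolding JU(1) by (rule sum.union_disjoint[OF fJl JU(2)])
  have large: "(\<Sum>j\<in>Jl. wt t (j, T j)) \<le> sq * Wm"
  proof -
    have "(\<Sum>j\<in>Jl. wt t (j, T j)) \<le> real (card Jl) * Wm"
    proof (rule sum_bounded_above)
      fix j assume "j \<in> Jl"
      then have "j \<in> J" by (simp add: Jl_def)
      then show "wt t (j, T j) \<le> Wm" unfolding Wm_def by (intro max_bound[OF U inj vt] dem) auto
    qed
    moreover have "real (card Jl) \<le> sq"
    proof (cases "Jl = {}")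
      case True then show ?thesis using sq0 by simp
    next
      case False
      then obtain j0 where j0: "j0 \<in> Jl" by blast
      have "real (card Jl) * sq \<le> (\<Sum>j\<in>Jl. real (card (T j)))"
      proof (rule sum_bounded_below)
        fix j assume "j \<in> Jl" then show "sq \<le> real (card (T j))" by (auto simp: Jl_def Pr_def sq_def)
      qed
      also have "\<dots> = real (\<Sum>j\<in>Jl. card (T j))" by simp
      also have "(\<Sum>j\<in>Jl. card (T j)) = card (\<Union> (T ` Jl))"
      proof (rule card_UN_disjoint[symmetric, OF fJl(1)])
        show "\<forall>i\<in>Jl. finite (T i)" using TU U by (auto simp: Jl_def intro: finite_subset)
        show "\<forall>i\<in>Jl. \<forall>j\<in>Jl. i \<noteq> j \<longrightarrow> T i \<inter> T j = {}" using dis by (auto simp: Jl_def)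
      qed
      also have "card (\<Union> (T ` Jl)) \<le> card U"
        using TU U by (intro card_mono) (auto simp: Jl_def)
      finally have c1: "real (card Jl) * sq \<le> real (card U)" by simp
      have "real (card U) = sq * sq" by (simp add: sq_def)
      moreover have "0 < sq"
      proof -
        have "j0 \<in> J" using j0 by (simp add: Jl_def)
        then have "T j0 \<subseteq> U" "T j0 \<noteq> {}" using TU by auto
        then have "card U > 0" using U by (metis card_gt_0_iff subset_empty)
        then show ?thesis by (simp add: sq_def)
      qed
      ultimately show ?thesis using c1 by (metis mult_le_cancel_right_pos)
    qed
    ultimately show ?thesis using Wm0 by (meson mult_right_mono order_trans)
  qed
  define Ls where "Ls = sorted_bids n t prio Pr"
  define G where "G = greedy_scan [] Ls"
  note pLs = sb_props[OF U inj vt, of Pr, folded Ls_def]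
  have gsG: "greedy_small U n prio t = alloc_of G" by (simp add: greedy_small_def G_def Ls_def Pr_def)
  have GL: "set G \<subseteq> set Ls" using scan_subset[of "[]" Ls] by (simp add: G_def)
  have blk: "\<exists>g. g \<in> set G \<and> wt t (j, T j) \<le> wt t g \<and> (fst g = j \<or> snd g \<inter> T j \<noteq> {})" if j: "j \<in> Js" for j
  proof -
    have jJ: "j \<in> J" "Pr (T j)" using j by (auto simp: Js_def)
    have "(j, T j) \<in> set Ls" using pLs dem[of j Pr, OF jJ] wpos[OF jJ(1)] by blast
    from scan_blocker[OF conjunct1[OF conjunct2[OF pLs]] this, of "[]"]
    obtain g where g: "g \<in> set G" "(g = (j, T j) \<or> lt (wt t) prio g (j, T j))"
      "(fst g = fst (j, T j) \<or> snd g \<inter> snd (j, T j) \<noteq> {})"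
      by (auto simp: G_def)
    have "wt t (j, T j) \<le> wt t g" using g(2) by (auto simp: lt_def)
    moreover have "fst g = j \<or> snd g \<inter> T j \<noteq> {}" using g(3) by simp
    ultimately show ?thesis using g(1) by blast
  qed
  define hb where "hb = (\<lambda>j. SOME g. g \<in> set G \<and> wt t (j, T j) \<le> wt t g \<and> (fst g = j \<or> snd g \<inter> T j \<noteq> {}))"
  have hbp: "hb j \<in> set G \<and> wt t (j, T j) \<le> wt t (hb j) \<and> (fst (hb j) = j \<or> snd (hb j) \<inter> T j \<noteq> {})"
    if "j \<in> Js" for j
    unfolding hb_def by (rule someI_ex[OF blk[OF that]])
  have gp: "\<forall>g\<in>set G. finite (snd g) \<and> real (card (snd g)) \<le> sq \<and> 0 \<le> wt t g"
  proof
    fix g assume "g \<in> set G"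
    then have g: "g \<in> set Ls" using GL by blast
    then have "g \<in> demanded n t Pr" "0 < wt t g" using pLs by auto
    then have "fst g < n" "snd g \<in> snd (t (fst g))" "Pr (snd g)" "0 < wt t g" by (auto simp: demanded_def)
    moreover then have "snd g \<subseteq> U" using vt by (auto simp: valid_type_def)
    ultimately show "finite (snd g) \<and> real (card (snd g)) \<le> sq \<and> 0 \<le> wt t g"
      using U by (auto simp: Pr_def sq_def intro: finite_subset)
  qed
  have small1: "(\<Sum>j\<in>Js. wt t (j, T j)) \<le> (sq + 1) * (\<Sum>g\<in>set G. wt t g)"
  proof (rule charge[OF fJl(2) _ _ _ _ gp])
    show "\<forall>j\<in>Js. hb j \<in> set G" using hbp by blast
    show "finite (set G)" by simp
    show "\<forall>j\<in>Js. wt t (j, T j) \<le> wt t (hb j) \<and> (fst (hb j) = j \<or> snd (hb j) \<inter> T j \<noteq> {})" using hbp by blast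
    show "\<forall>j\<in>Js. \<forall>j'\<in>Js. j \<noteq> j' \<longrightarrow> T j \<inter> T j' = {}" using dis by (auto simp: Js_def)
  qed
  have "(\<Sum>g\<in>set G. wt t g) \<le> Wg"
  proof -
    have d: "distinct (map fst G)" unfolding G_def by (rule scan_distinct) simp
    have "\<forall>g\<in>set G. fst g < n \<and> snd g \<in> snd (t (fst g))"
    proof
      fix g assume "g \<in> set G"
      then have "g \<in> demanded n t Pr" using GL pLs by blast
      then show "fst g < n \<and> snd g \<in> snd (t (fst g))" by (auto simp: demanded_def)
    qed
    from welfare_ge_G[OF d this f] show ?thesis by (simp add: Wg_def gsG)
  qed
  then have small: "(\<Sum>j\<in>Js. wt t (j, T j)) \<le> (sq + 1) * Wg"
    using small1 sq0 by (meson add_nonneg_nonneg mult_left_mono order_trans zero_le_one)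
  have "welfare n t A \<le> sq * Wm + (sq + 1) * Wg" using wA split large small by linarith
  also have "\<dots> \<le> (sq + 1) * (Wm + Wg)" using Wm0 by (simp add: algebra_simps)
  finally show ?thesis by (simp add: sq_def Wm_def Wg_def)
qed


theorem theorem10:
  fixes U :: "'g set" and n k :: nat and prio :: "nat \<times> 'g set \<Rightarrow> nat"
  assumes "finite U"
    and "inj_on prio ({..<n} \<times> Pow U)"
  shows "universally_truthful U n k (RandPoly U n prio)
    \<and> (\<forall>t. (\<forall>i<n. valid_type U k (t i)) \<longrightarrow>
          expected_welfare n t (RandPoly U n prio) \<ge> OPT U n t / (2 * (sqrt (real (card U)) + 1)))"
proof
  have sp: "set_pmf (RandPoly U n prio) = (\<lambda>c. if c then max_only n prio else greedy_small U n prio) ` UNIV"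
    by (simp add: RandPoly_def)
  show "universally_truthful U n k (RandPoly U n prio)"
    unfolding universally_truthful_def sp
    using max_truthful[OF assms] greedy_truthful[OF assms] by auto
  show "\<forall>t. (\<forall>i<n. valid_type U k (t i)) \<longrightarrow>
          expected_welfare n t (RandPoly U n prio) \<ge> OPT U n t / (2 * (sqrt (real (card U)) + 1))"
  proof (intro allI impI)
    fix t assume vt: "\<forall>i<n. valid_type U k (t i)"
    define sq where "sq = sqrt (real (card U))"
    define Wm where "Wm = welfare n t (max_only n prio t)"
    define Wg where "Wg = welfare n t (greedy_small U n prio t)"
    have E: "expected_welfare n t (RandPoly U n prio) = Wm * (1/2) + Wg * (1 - 1/2)"
      by (simp add: expected_welfare_def RandPoly_def Wm_def Wg_def)
    have sq0: "0 \<le> sq" by (simp add: sq_def)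
    have "OPT U n t \<le> (sq + 1) * (Wm + Wg)"
      unfolding OPT_def
    proof (rule cSup_least)
      have "feasible U n (\<lambda>_. {})" by (simp add: feasible_def)
      then show "{welfare n t A |A. feasible U n A} \<noteq> {}" by blast
    next
      fix x assume "x \<in> {welfare n t A |A. feasible U n A}"
      then obtain A where "x = welfare n t A" "feasible U n A" by blast
      then show "x \<le> (sq + 1) * (Wm + Wg)"
        using approx[OF assms vt] by (simp add: sq_def Wm_def Wg_def)
    qed
    then have "OPT U n t \<le> (2 * (sq + 1)) * expected_welfare n t (RandPoly U n prio)"
      unfolding E by (simp add: algebra_simps)
    moreover have "0 < 2 * (sq + 1)" using sq0 by simp
    ultimately show "OPT U n t / (2 * (sqrt (real (card U)) + 1)) \<le> expected_welfare n t (RandPoly U n prio)"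
      by (simp add: sq_def pos_divide_le_eq mult.commute)
  qed
qed

end
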